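(* Let $n\geq 2$, $\alpha>0$, and $k\in\mathbb{N}\setminus\{0\}$. Let $\mathbb{D}_k:=\{2^{-j}:0\leq j\leq k\}$ and $$\mathscr{R}_k:=\Big\{[0,s_1]\times\cdots\times[0,s_{n-1}]\times\Big[0,\frac{\alpha}{s_1\cdots s_{n-1}}\Big] : s_1,\dots,s_{n-1}\in\mathbb{D}_k\Big\}.$$ Then $\big|\bigcup_{R\in\mathscr{R}_k}R\big|\geq\frac{1}{3\cdot 2^{n-2}}\,k^{n-1}\alpha$.
   Context: $|\cdot|$ denotes Lebesgue measure on $\mathbb{R}^n$. *)

theory Defs
  imports "HOL-Analysis.Analysis"
begin

definition dyadics :: "nat \<Rightarrow> real set" where
  "dyadics k = {1 / 2 ^ j | j. j \<le> k}"

text \<open>The box [0,s_1] x ... x [0, alpha/(prod of the other s_i)] in real^'n,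
  where the coordinate l plays the role of the last coordinate.\<close>
definition rect :: "'n::finite \<Rightarrow> real \<Rightarrow> ('n \<Rightarrow> real) \<Rightarrow> (real ^ 'n) set" where
  "rect l \<alpha> s = cbox 0 (\<chi> i. if i = l then \<alpha> / (\<Prod>j\<in>UNIV - {l}. s j) else s i)"

text \<open>The family R_k: s ranges over side lengths in D_k on all coordinates other
  than l (the value s l is irrelevant and fixed to 1).\<close>
definition rects :: "'n::finite \<Rightarrow> real \<Rightarrow> nat \<Rightarrow> (real ^ 'n) set set" where
  "rects l \<alpha> k = {rect l \<alpha> s | s. s l = 1 \<and> (\<forall>j. j \<noteq> l \<longrightarrow> s j \<in> dyadics k)}"

end

theory Submission
  imports Defs
begin

lemma measure_box_cart:
  fixes a b :: "real ^ 'n::finite"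
  assumes "\<And>i. a $ i \<le> b $ i"
  shows "measure lebesgue (box a b) = (\<Prod>i\<in>UNIV. b $ i - a $ i)"
proof -
  have "measure lebesgue (box a b) = measure lborel (box a b)"
    by (simp add: measure_completion)
  also have "\<dots> = measure lborel (cbox a b)"
    using assms by (subst measure_lborel_box_eq, subst measure_lborel_cbox_eq) simp
  also have "\<dots> = (\<Prod>i\<in>UNIV. b $ i - a $ i)"
  proof (rule content_cbox_cart)
    have "a \<in> cbox a b" using assms by (simp add: mem_box_cart)
    then show "cbox a b \<noteq> {}" by blast
  qed
  finally show ?thesis .
qed

lemma finite_rects: "finite (rects l \<alpha> k)"
proof -
  have fd: "finite (dyadics k)" unfolding dyadics_def
    by (rule finite_subset[of _ "(\<lambda>j. 1 / 2 ^ j) ` {..k}"]) auto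
  have "{s. s l = 1 \<and> (\<forall>j. j \<noteq> l \<longrightarrow> s j \<in> dyadics k)} \<subseteq> PiE UNIV (\<lambda>_. insert 1 (dyadics k))"
    by (auto simp: PiE_def)
  moreover have "finite (PiE UNIV (\<lambda>_::'a. insert 1 (dyadics k)))"
    using fd by (intro finite_PiE) auto
  ultimately have "finite {s. s l = 1 \<and> (\<forall>j. j \<noteq> l \<longrightarrow> s j \<in> dyadics k)}"
    by (rule finite_subset)
  then have "finite ((rect l \<alpha>) ` {s. s l = 1 \<and> (\<forall>j. j \<noteq> l \<longrightarrow> s j \<in> dyadics k)})" by simp
  moreover have "rects l \<alpha> k = (rect l \<alpha>) ` {s. s l = 1 \<and> (\<forall>j. j \<noteq> l \<longrightarrow> s j \<in> dyadics k)}"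
    unfolding rects_def by auto
  ultimately show ?thesis by simp
qed

lemma rects_lmeasurable: "\<Union> (rects l \<alpha> k) \<in> lmeasurable"
  using finite_rects[of l \<alpha> k]
  by (intro fmeasurable.finite_Union) (auto simp: rects_def rect_def)

theorem mainTheorem2:
  fixes l :: "'n::finite" and \<alpha> :: real and k :: nat
  assumes "CARD('n) \<ge> 2" and "\<alpha> > 0" and "k \<ge> 1"
  shows "measure lebesgue (\<Union> (rects l \<alpha> k))
           \<ge> 1 / (3 * 2 ^ (CARD('n) - 2)) * real k ^ (CARD('n) - 1) * \<alpha>"
  (is "?M \<ge> _")
proof -
  define m where "m = CARD('n) - 1"
  have m1: "m \<ge> 1" using assms(1) unfolding m_def by simp
  have cardL: "card (UNIV - {l}) = m" unfolding m_def by (simp add: card_Diff_singleton)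
  define lo :: "nat \<Rightarrow> real" where "lo t = (if t < k then 1 / 2 ^ (t+1) else 0)" for t
  define hi :: "nat \<Rightarrow> real" where "hi t = 1 / 2 ^ t" for t
  define c :: "nat \<Rightarrow> real" where "c t = (if t < k then 1/2 else 1)" for t
  define J where "J = PiE (UNIV - {l}) (\<lambda>_. {..k})"
  define a :: "('n \<Rightarrow> nat) \<Rightarrow> real ^ 'n" where "a g = (\<chi> i. if i = l then 0 else lo (g i))" for g
  define b :: "('n \<Rightarrow> nat) \<Rightarrow> real ^ 'n" where
    "b g = (\<chi> i. if i = l then \<alpha> * 2 ^ (\<Sum>j\<in>UNIV - {l}. g j) else hi (g i))" for g
  define B where "B g = box (a g) (b g)" for g
  have lohi: "lo t \<le> hi t" for t unfolding lo_def hi_def by (auto simp: field_simps)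
  have ab: "a g $ i \<le> b g $ i" for g i
    using lohi assms(2) unfolding a_def b_def by auto
  have finJ: "finite J" unfolding J_def by (intro finite_PiE) auto
  have sub: "(\<Union>g\<in>J. B g) \<subseteq> \<Union> (rects l \<alpha> k)"
  proof
    fix x assume "x \<in> (\<Union>g\<in>J. B g)"
    then obtain g where gJ: "g \<in> J" and xB: "x \<in> B g" by blast
    define s where "s i = (if i = l then 1 else hi (g i))" for i
    have sR: "rect l \<alpha> s \<in> rects l \<alpha> k"
      unfolding rects_def
    proof (intro CollectI exI conjI allI impI)
      show "s l = 1" by (simp add: s_def)
      fix j assume "j \<noteq> l"
      then have "g j \<le> k" using gJ unfolding J_def by auto
      then show "s j \<in> dyadics k" using \<open>j \<noteq> l\<close> unfolding s_def hi_def dyadics_def by auto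
    qed simp
    have prodeq: "\<alpha> / (\<Prod>j\<in>UNIV - {l}. s j) = \<alpha> * 2 ^ (\<Sum>j\<in>UNIV - {l}. g j)"
    proof -
      have "(\<Prod>j\<in>UNIV - {l}. s j) = (\<Prod>j\<in>UNIV - {l}. 1 / 2 ^ g j)"
        by (rule prod.cong) (auto simp: s_def hi_def)
      also have "\<dots> = 1 / (\<Prod>j\<in>UNIV - {l}. 2 ^ g j)" by (simp add: prod_dividef)
      also have "(\<Prod>j\<in>UNIV - {l}. (2::real) ^ g j) = 2 ^ (\<Sum>j\<in>UNIV - {l}. g j)"
        by (simp add: power_sum)
      finally show ?thesis by simp
    qed
    have "x \<in> rect l \<alpha> s"
      unfolding rect_def mem_box_cart
    proof
      fix i
      have xi: "a g $ i < x $ i \<and> x $ i < b g $ i" using xB unfolding B_def mem_box_cart by blast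
      have "0 \<le> a g $ i" unfolding a_def lo_def by auto
      then show "0 $ i \<le> x $ i \<and> x $ i \<le> (\<chi> i. if i = l then \<alpha> / (\<Prod>j\<in>UNIV - {l}. s j) else s i) $ i"
        using xi prodeq unfolding b_def s_def by (auto split: if_splits)
    qed
    then show "x \<in> \<Union> (rects l \<alpha> k)" using sR by blast
  qed
  have disj: "disjoint_family_on B J"
    unfolding disjoint_family_on_def
  proof (intro ballI impI)
    fix g h assume gJ: "g \<in> J" and hJ: "h \<in> J" and gh: "g \<noteq> h"
    obtain i where gi: "g i \<noteq> h i" using gh by auto
    have il: "i \<noteq> l"
    proof
      assume "i = l"
      then have "g i = undefined" "h i = undefined"
        using gJ hJ unfolding J_def by (auto intro: PiE_arb)
      then show False using gi by simp
    qed
    have gk: "g i \<le> k" "h i \<le> k" using gJ hJ il unfolding J_def by auto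
    have key: "\<And>u v. u \<le> k \<Longrightarrow> v \<le> k \<Longrightarrow> u < v \<Longrightarrow> hi v \<le> lo u"
    proof -
      fix u v :: nat assume "u \<le> k" "v \<le> k" "u < v"
      then have "u < k" "u + 1 \<le> v" by auto
      moreover have "(2::real) ^ (u+1) \<le> 2 ^ v" by (rule power_increasing) (use \<open>u + 1 \<le> v\<close> in auto)
      ultimately show "hi v \<le> lo u" unfolding hi_def lo_def
        by (simp add: divide_simps)
    qed
    show "B g \<inter> B h = {}"
    proof (rule ccontr)
      assume "B g \<inter> B h \<noteq> {}"
      then obtain x where "x \<in> B g" "x \<in> B h" by blast
      then have "a g $ i < x $ i \<and> x $ i < b g $ i" "a h $ i < x $ i \<and> x $ i < b h $ i"
        unfolding B_def mem_box_cart by blast+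
      then have x: "lo (g i) < x $ i" "x $ i < hi (g i)" "lo (h i) < x $ i" "x $ i < hi (h i)"
        using il unfolding a_def b_def by simp_all
      have "g i < h i \<or> h i < g i" using gi by arith
      then show False
      proof (elim disjE)
        assume "g i < h i"
        then have "hi (h i) \<le> lo (g i)" using key gk by blast
        then show False using x by linarith
      next
        assume "h i < g i"
        then have "hi (g i) \<le> lo (h i)" using key gk by blast
        then show False using x by linarith
      qed
    qed
  qed
  have mB: "measure lebesgue (B g) = \<alpha> * (\<Prod>i\<in>UNIV - {l}. c (g i))" for g
  proof -
    have "measure lebesgue (B g) = (\<Prod>i\<in>UNIV. b g $ i - a g $ i)"
      unfolding B_def by (rule measure_box_cart) (rule ab)
    also have "\<dots> = (b g $ l - a g $ l) * (\<Prod>i\<in>UNIV - {l}. b g $ i - a g $ i)"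
      by (simp add: prod.remove)
    also have "(\<Prod>i\<in>UNIV - {l}. b g $ i - a g $ i) = (\<Prod>i\<in>UNIV - {l}. c (g i) / 2 ^ g i)"
    proof (rule prod.cong)
      fix i assume "i \<in> UNIV - {l}"
      then show "b g $ i - a g $ i = c (g i) / 2 ^ g i"
        unfolding a_def b_def c_def hi_def lo_def by (auto simp: field_simps)
    qed simp
    also have "\<dots> = (\<Prod>i\<in>UNIV - {l}. c (g i)) / 2 ^ (\<Sum>j\<in>UNIV - {l}. g j)"
      by (simp add: prod_dividef power_sum)
    finally show ?thesis unfolding a_def b_def by simp
  qed
  have sumc: "(\<Sum>t\<in>{..k}. c t) = real k / 2 + 1"
  proof -
    have "{..k} = insert k {..<k}" by auto
    then have "(\<Sum>t\<in>{..k}. c t) = c k + (\<Sum>t\<in>{..<k}. c t)" by simp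
    also have "(\<Sum>t\<in>{..<k}. c t) = (\<Sum>t\<in>{..<k}. 1/2)" by (rule sum.cong) (auto simp: c_def)
    finally show ?thesis by (simp add: c_def)
  qed
  have "measure lebesgue (\<Union>g\<in>J. B g) = (\<Sum>g\<in>J. measure lebesgue (B g))"
  proof (rule measure_finite_Union[OF finJ _ disj])
    have Bm: "B g \<in> lmeasurable" for g by (simp add: B_def)
    then show "B ` J \<subseteq> sets lebesgue" by (auto simp: fmeasurable_def)
    show "emeasure lebesgue (B g) \<noteq> \<infinity>" for g using Bm[of g] by (auto simp: fmeasurable_def)
  qed
  also have "\<dots> = \<alpha> * (\<Sum>g\<in>J. \<Prod>i\<in>UNIV - {l}. c (g i))" by (simp add: mB sum_distrib_left)
  also have "(\<Sum>g\<in>J. \<Prod>i\<in>UNIV - {l}. c (g i)) = (\<Prod>i\<in>UNIV - {l}. \<Sum>t\<in>{..k}. c t)"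
    unfolding J_def by (rule prod_sum_PiE[symmetric]) auto
  also have "\<dots> = (real k / 2 + 1) ^ m" using cardL by (simp add: sumc)
  finally have eqU: "measure lebesgue (\<Union>g\<in>J. B g) = \<alpha> * (real k / 2 + 1) ^ m" .
  have "measure lebesgue (\<Union>g\<in>J. B g) \<le> ?M"
    by (rule measure_mono_fmeasurable[OF sub _ rects_lmeasurable])
       (use finJ in \<open>auto simp: B_def\<close>)
  moreover have "1 / (3 * 2 ^ (CARD('n) - 2)) * real k ^ (CARD('n) - 1) * \<alpha> \<le> \<alpha> * (real k / 2 + 1) ^ m"
  proof -
    have c2: "CARD('n) - 2 = m - 1" "CARD('n) - 1 = m" unfolding m_def by auto
    have p: "(2::real) ^ m \<le> 3 * 2 ^ (m - 1)"
    proof -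
      have "(2::real) ^ m = 2 * 2 ^ (m - 1)" using m1 by (cases m) auto
      then show ?thesis by simp
    qed
    have "1 / (3 * 2 ^ (m - 1)) * real k ^ m \<le> 1 / 2 ^ m * real k ^ m"
      using p by (intro mult_right_mono) (auto simp: divide_simps)
    also have "\<dots> = (real k / 2) ^ m" by (simp add: power_divide)
    also have "\<dots> \<le> (real k / 2 + 1) ^ m" by (intro power_mono) auto
    finally have "1 / (3 * 2 ^ (m - 1)) * real k ^ m * \<alpha> \<le> (real k / 2 + 1) ^ m * \<alpha>"
      using assms(2) by (intro mult_right_mono) auto
    then show ?thesis using c2 by (simp only: mult.commute)
  qed
  ultimately show ?thesis using eqU by linarith
qed

end
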